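(* Assume the Dickson--Hardy--Littlewood conjecture: every admissible tuple of natural numbers is prime-producing. Let $k \geq 1$. Then every good $k$-tuple $(p_1,\dots,p_k)$ can be extended to a good $(k+1)$-tuple $(p_1,\dots,p_k,p_{k+1})$.
   Context: A tuple $(h_1,\dots,h_k)$ of natural numbers is admissible if for every prime $p$ there is at least one residue class mod $p$ containing none of $h_1,\dots,h_k$. A tuple is prime-producing if there are infinitely many integers $n$ such that $n+h_1,\dots,n+h_k$ are all prime. A good $k$-tuple is an increasing $k$-tuple $(p_1,\dots,p_k)$ of primes with $3 < p_1 < \dots < p_k$ such that, for all $1 \le i < j \le k$, the number $p_i+p_j+1$ is prime and $p_i$ does not divide $p_j+2$. *)

theory Defs
  imports "HOL-Computational_Algebra.Primes"
begin

definition admissible :: "nat list \<Rightarrow> bool" where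
  "admissible hs \<longleftrightarrow>
     (\<forall>p::nat. prime p \<longrightarrow> (\<exists>r<p. \<forall>i<length hs. hs ! i mod p \<noteq> r))"

definition prime_producing :: "nat list \<Rightarrow> bool" where
  "prime_producing hs \<longleftrightarrow>
     infinite {n::nat. \<forall>i<length hs. prime (n + hs ! i)}"

definition DHL_conjecture :: bool where
  "DHL_conjecture \<longleftrightarrow> (\<forall>hs. admissible hs \<longrightarrow> prime_producing hs)"

definition good_tuple :: "nat \<Rightarrow> nat list \<Rightarrow> bool" where
  "good_tuple k ps \<longleftrightarrow>
     length ps = k \<and>
     (\<forall>i<k. prime (ps ! i) \<and> 3 < ps ! i) \<and>
     (\<forall>i j. i < j \<and> j < k \<longrightarrow>
        ps ! i < ps ! j \<and> prime (ps ! i + ps ! j + 1) \<and> \<not> (ps ! i dvd ps ! j + 2))"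

end

theory Submission
  imports Defs
begin

lemma not_prime4: "\<not> prime (4::nat)" using prime_nat_not_dvd[of 4 2] by auto
lemma not_prime6: "\<not> prime (6::nat)" using prime_nat_not_dvd[of 6 2] by auto

lemma good_facts:
  assumes "good_tuple k ps"
  shows "\<forall>x\<in>set ps. prime x \<and> 3 < x"
    and "\<forall>x\<in>set ps. \<forall>y\<in>set ps. x \<noteq> y \<longrightarrow> prime (x + y + 1)"
    and "\<forall>x\<in>set ps. \<forall>y\<in>set ps. x < y \<longrightarrow> \<not> x dvd y + 2"
proof -
  have L: "length ps = k" and A: "\<forall>i<k. prime (ps ! i) \<and> 3 < ps ! i"
    and B: "\<forall>i j. i < j \<and> j < k \<longrightarrow>
        ps ! i < ps ! j \<and> prime (ps ! i + ps ! j + 1) \<and> \<not> (ps ! i dvd ps ! j + 2)"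
    using assms unfolding good_tuple_def by auto
  show "\<forall>x\<in>set ps. prime x \<and> 3 < x" using A L by (auto simp: in_set_conv_nth)
  show "\<forall>x\<in>set ps. \<forall>y\<in>set ps. x \<noteq> y \<longrightarrow> prime (x + y + 1)"
  proof (intro ballI impI)
    fix x y assume "x \<in> set ps" "y \<in> set ps" "x \<noteq> y"
    then obtain i j where ij: "i < k" "j < k" "x = ps ! i" "y = ps ! j"
      using L by (auto simp: in_set_conv_nth)
    have "i \<noteq> j" using ij \<open>x \<noteq> y\<close> by auto
    then have "i < j \<or> j < i" by arith
    then show "prime (x + y + 1)"
    proof
      assume "i < j" then show ?thesis using B ij by auto
    next
      assume "j < i" then have "prime (y + x + 1)" using B ij by auto
      then show ?thesis by (simp add: add.commute add.left_commute)
    qed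
  qed
  show "\<forall>x\<in>set ps. \<forall>y\<in>set ps. x < y \<longrightarrow> \<not> x dvd y + 2"
  proof (intro ballI impI)
    fix x y assume "x \<in> set ps" "y \<in> set ps" "x < y"
    then obtain i j where ij: "i < k" "j < k" "x = ps ! i" "y = ps ! j"
      using L by (auto simp: in_set_conv_nth)
    have "i < j"
    proof (rule ccontr)
      assume "\<not> i < j"
      then have "j < i \<or> i = j" by auto
      then show False using B ij \<open>x < y\<close> by (metis less_asym order_less_irrefl)
    qed
    then show "\<not> x dvd y + 2" using B ij by auto
  qed
qed

lemma adm:
  assumes P: "\<forall>x\<in>set ps. prime x \<and> 3 < x"
    and S: "\<forall>x\<in>set ps. \<forall>y\<in>set ps. x \<noteq> y \<longrightarrow> prime (x + y + 1)"
    and D: "\<forall>x\<in>set ps. \<forall>y\<in>set ps. x < y \<longrightarrow> \<not> x dvd y + 2"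
  shows "admissible (0 # 2 # map (\<lambda>x. x + 1) ps)"
  unfolding admissible_def
proof (intro allI impI)
  fix p :: nat assume pp: "prime p"
  have p2: "p \<ge> 2" using pp prime_ge_2_nat by blast
  let ?hs = "0 # 2 # map (\<lambda>x. x + 1) ps"
  have red: "(\<forall>i<length ?hs. ?hs ! i mod p \<noteq> r)" if "0 mod p \<noteq> r" "2 mod p \<noteq> r"
    "\<forall>x\<in>set ps. (x + 1) mod p \<noteq> r" for r
  proof -
    have "\<forall>h\<in>set ?hs. h mod p \<noteq> r" using that by auto
    then show ?thesis by (metis nth_mem)
  qed
  show "\<exists>r<p. \<forall>i<length ?hs. ?hs ! i mod p \<noteq> r"
  proof (cases "p \<in> set ps")
    case False
    have "\<forall>x\<in>set ps. (x + 1) mod p \<noteq> 1"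
    proof
      fix x assume x: "x \<in> set ps"
      show "(x + 1) mod p \<noteq> 1"
      proof
        assume "(x + 1) mod p = 1"
        then have "p dvd x" using p2
          by (metis add_diff_cancel_right' dvd_minus_mod mod_Suc_eq mod_less one_less_numeral_iff
              semiring_norm(76) Suc_eq_plus1 le_less_trans less_numeral_extra(1) mod_mod_trivial mod_self)
        then have "p = x" using P x pp by (metis prime_nat_iff p2 numeral_le_one_iff semiring_norm(69) not_le)
        then show False using False x by simp
      qed
    qed
    moreover have "2 mod p \<noteq> 1" using p2
      by (metis One_nat_def dvd_mod_iff mod_Suc mod_mod_trivial one_add_one plus_1_eq_Suc dvd_refl
          mod_self n_not_Suc_n nat_dvd_1_iff_1 not_numeral_le_zero le_antisym)
    ultimately show ?thesis using red[of 1] p2 by (intro exI[of _ 1]) auto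
  next
    case True
    have p3: "p > 3" using True P by auto
    show ?thesis
    proof (cases "p = 5")
      case True
      have "\<forall>x\<in>set ps. (x + 1) mod p \<noteq> 4"
      proof
        fix x assume x: "x \<in> set ps"
        show "(x + 1) mod p \<noteq> 4"
        proof
          assume h: "(x + 1) mod p = 4"
          then have "x \<noteq> 5" using True by auto
          moreover have "x \<noteq> 4" using P x using not_prime4 by auto
          ultimately have "5 < x" using P x by auto
          moreover have "5 dvd x + 2" using h True by presburger
          ultimately show False using D x \<open>p \<in> set ps\<close> True by auto
        qed
      qed
      then show ?thesis using red[of 4] True by (intro exI[of _ 4]) auto
    next
      case False
      have p7: "p \<ge> 7"
      proof -
        have "p \<noteq> 4" using pp using not_prime4 by auto
        moreover have "p \<noteq> 6" using pp using not_prime6 by auto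
        ultimately show ?thesis using p3 False by auto
      qed
      show ?thesis
      proof (cases "\<forall>x\<in>set ps. (x + 1) mod p \<noteq> p - 2")
        case True
        have "2 mod p \<noteq> p - 2" using p7 by auto
        then show ?thesis using red[of "p-2"] True p7 by (intro exI[of _ "p-2"]) auto
      next
        case C1: False
        then obtain a where a: "a \<in> set ps" "(a + 1) mod p = p - 2" by auto
        have pa: "p dvd a + 3"
        proof -
          have "(a + 3) mod p = ((a + 1) mod p + 2) mod p"
            proof -
              have "a + 3 = (a + 1) + 2" by simp
              then show ?thesis by (metis mod_add_left_eq)
            qed
          also have "\<dots> = 0"
          proof -
            have "(a + 1) mod p + 2 = p" using a p7 by simp
            then show ?thesis by simp
          qed
          finally show ?thesis by auto
        qed
        have "\<forall>x\<in>set ps. (x + 1) mod p \<noteq> 3"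
        proof
          fix b assume b: "b \<in> set ps"
          show "(b + 1) mod p \<noteq> 3"
          proof
            assume h: "(b + 1) mod p = 3"
            have bm: "b mod p = 2"
            proof -
              have "(b + 1) mod p = (b mod p + 1) mod p" by (metis mod_add_left_eq)
              then have e: "(b mod p + 1) mod p = 3" using h by simp
              have "b mod p < p" using p7 by simp
              then have "b mod p + 1 < p \<or> b mod p + 1 = p" by auto
              then show ?thesis using e p7 by auto
            qed
            have "b \<noteq> 2" using P b by auto
            have bp: "b > p"
            proof (rule ccontr)
              assume "\<not> b > p"
              then have "b < p \<or> b = p" by auto
              then show False using bm \<open>b \<noteq> 2\<close> by auto
            qed
            have beq: "b = b div p * p + 2" using bm div_mult_mod_eq[of b p] by simp
            have "a \<noteq> b"
            proof
              assume "a = b"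
              then have "p dvd (b div p * p) + 5" using pa beq by (metis add.assoc numeral_plus_numeral semiring_norm(2) semiring_norm(4) semiring_norm(7))
              then have "p dvd 5" by (simp add: dvd_add_right_iff)
              then show False using p7 by (auto dest: dvd_imp_le)
            qed
            have "p dvd a + b + 1"
            proof -
              have "a + b + 1 = (a + 3) + b div p * p" using beq by linarith
              moreover have "p dvd (a + 3) + b div p * p" using pa by (simp add: dvd_add)
              ultimately show ?thesis by metis
            qed
            moreover have "prime (a + b + 1)" using S a b \<open>a \<noteq> b\<close> by auto
            ultimately have "p = a + b + 1" using pp primes_dvd_imp_eq[of p "a+b+1"] by auto
            then show False using bp by auto
          qed
        qed
        moreover have "2 mod p \<noteq> 3" using p7 by auto
        ultimately show ?thesis using red[of 3] p7 by (intro exI[of _ 3]) auto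
      qed
    qed
  qed
qed

theorem mainTheorem2:
  assumes "DHL_conjecture"
    and "k \<ge> 1"
    and "good_tuple k ps"
  shows "\<exists>q::nat. good_tuple (k + 1) (ps @ [q])"
proof -
  note F = good_facts[OF assms(3)]
  let ?hs = "0 # 2 # map (\<lambda>x. x + 1) ps"
  have "admissible ?hs" using adm F by blast
  then have "prime_producing ?hs" using assms(1) unfolding DHL_conjecture_def by blast
  then have inf: "infinite {n. \<forall>i<length ?hs. prime (n + ?hs ! i)}"
    unfolding prime_producing_def by blast
  obtain n where n: "\<forall>i<length ?hs. prime (n + ?hs ! i)" "n > sum_list ps"
    using inf by (metis (no_types, lifting) finite_nat_set_iff_bounded_le mem_Collect_eq not_le)
  have hs: "\<forall>h\<in>set ?hs. prime (n + h)" using n(1) by (metis in_set_conv_nth)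
  have np: "prime n" using hs by auto
  have n2: "prime (n + 2)" using hs by auto
  have nx: "\<forall>x\<in>set ps. prime (n + x + 1)" using hs by (auto simp: add.assoc)
  have lt: "\<forall>x\<in>set ps. x < n" proof -
    have "\<forall>x\<in>set ps. x \<le> sum_list ps" by (induction ps) auto
    then show ?thesis using n(2) by auto
  qed
  have L: "length ps = k" using assms(3) unfolding good_tuple_def by auto
  have old: "\<forall>i<k. prime (ps ! i) \<and> 3 < ps ! i"
    "\<forall>i j. i < j \<and> j < k \<longrightarrow>
        ps ! i < ps ! j \<and> prime (ps ! i + ps ! j + 1) \<and> \<not> (ps ! i dvd ps ! j + 2)"
    using assms(3) unfolding good_tuple_def by auto
  have p0: "ps ! 0 \<in> set ps" using L assms(2) by auto
  have n3: "3 < n" using F(1) p0 lt by fastforce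
  have "good_tuple (k + 1) (ps @ [n])"
    unfolding good_tuple_def
  proof (intro conjI)
    show "length (ps @ [n]) = k + 1" using L by simp
  next
    show "\<forall>i<k + 1. prime ((ps @ [n]) ! i) \<and> 3 < (ps @ [n]) ! i"
    proof (intro allI impI)
      fix i assume "i < k + 1"
      then show "prime ((ps @ [n]) ! i) \<and> 3 < (ps @ [n]) ! i"
        using old(1) L np n3 by (cases "i < k") (auto simp: nth_append)
    qed
  next
    show "\<forall>i j. i < j \<and> j < k + 1 \<longrightarrow> (ps @ [n]) ! i < (ps @ [n]) ! j \<and> prime ((ps @ [n]) ! i + (ps @ [n]) ! j + 1) \<and>
          \<not> (ps @ [n]) ! i dvd (ps @ [n]) ! j + 2"
    proof (intro allI impI)
    fix i j assume ij: "i < j \<and> j < k + 1"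
    show "(ps @ [n]) ! i < (ps @ [n]) ! j \<and> prime ((ps @ [n]) ! i + (ps @ [n]) ! j + 1) \<and>
          \<not> (ps @ [n]) ! i dvd (ps @ [n]) ! j + 2"
    proof (cases "j < k")
      case True
      then show ?thesis using old(2) ij L by (auto simp: nth_append)
    next
      case False
      then have j: "j = k" using ij by auto
      have xi: "ps ! i \<in> set ps" using ij j L by auto
      have e1: "(ps @ [n]) ! i = ps ! i" using ij j L by (simp add: nth_append)
      have e2: "(ps @ [n]) ! j = n" using j L by (simp add: nth_append)
      have a: "ps ! i < n" using lt xi by auto
      have b: "prime (ps ! i + n + 1)" using nx xi by (metis add.commute)
      have c: "\<not> ps ! i dvd n + 2"
      proof
        assume "ps ! i dvd n + 2"
        then have "ps ! i = 1 \<or> ps ! i = n + 2" using n2 by (simp add: prime_nat_iff)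
        then show False using a F(1) xi by auto
      qed
      show ?thesis using a b c e1 e2 by simp
    qed
  qed
  qed
  then show ?thesis by blast
qed

end
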